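(* Let $\Xi\subseteq\mathbb R^m$ be closed, let $\xi^1,\dots,\xi^N\in\Xi$, $P_0=\frac1N\sum_{i=1}^N\delta_{\xi^i}$, $\rho>0$, and $\mathcal D=\{Q: W_1(Q,P_0)\le\rho\}$, where $W_1$ is the 1-Wasserstein distance with ground metric $\|\cdot\|_2$ on distributions supported on $\Xi$. Let $\alpha\in(0,1)$, $\lambda\le\alpha$, $\bar\lambda=\frac{\alpha-\lambda}{1+\alpha-2\lambda}$. Let $\mathcal F$ be the set of feasible path flows (OD demand conservation, nonnegativity), and for $f\in\mathcal F$ let $Z(f,\cdot):\Xi\to\mathbb R$ be measurable, upper semicontinuous and of at most linear growth. Define $$\Phi^{\mathrm{DRO}}_{\alpha,\lambda}(f)=\sup_{Q\in\mathcal D}\big\{(1-\bar\lambda)\mathbb E_Q[Z(f,\xi)]+\bar\lambda\operatorname{CVaR}_{\alpha,Q}(Z(f,\xi))\big\},\qquad g_t(f,\xi)=(1-\bar\lambda)Z(f,\xi)+\frac{\bar\lambda}{1-\alpha}(Z(f,\xi)-t)_+ .$$ Then for all $f\in\mathcal F$, $$\Phi^{\mathrm{DRO}}_{\alpha,\lambda}(f)\le\inf_{t\in\mathbb R,\ \kappa\ge0}\Big\{\bar\lambda t+\kappa\rho+\frac1N\sum_{i=1}^N\sup_{\xi\in\Xi}\big(g_t(f,\xi)-\kappa\|\xi-\xi^i\|_2\big)\Big\}.$$ Moreover, suppose $\Xi$ is also convex, the minimax interchange $\sup_{Q\in\mathcal D}\inf_{t}\{\bar\lambda t+\mathbb E_Q[g_t(f,\xi)]\}=\inf_t\sup_{Q\in\mathcal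 D}\{\bar\lambda t+\mathbb E_Q[g_t(f,\xi)]\}$ holds, and $\xi\mapsto g_t(f,\xi)$ satisfies the piecewise-concave condition (it equals $\max_{j=1,\dots,J}\ell_j(\xi)$ for finitely many $\ell_j:\mathbb R^m\to\mathbb R\cup\{-\infty\}$ such that each $-\ell_j$ is proper, convex and lower semicontinuous and $\ell_j$ is not identically $-\infty$ on $\Xi$; e.g. $g_t(f,\cdot)$ piecewise affine). Then the inequality holds with equality, and minimizing $\Phi^{\mathrm{DRO}}_{\alpha,\lambda}(f)$ over $f\in\mathcal F$ is equivalent to the semi-infinite convex program $$\min_{f\in\mathcal F,\,t\in\mathbb R,\,\kappa\ge0,\,s\in\mathbb R^N}\ \bar\lambda t+\kappa\rho+\frac1N\sum_{i=1}^Ns_i\quad\text{s.t. } s_i\ge g_t(f,\xi)-\kappa\|\xi-\xi^i\|_2\ \ \forall\xi\in\Xi,\ i=1,\dots,N.$$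
   Context: $\operatorname{CVaR}_{\alpha,Q}(Y):=\inf_{\gamma\in\mathbb R}\{\gamma+\frac1{1-\alpha}\mathbb E_Q[(Y-\gamma)_+]\}$; $(x)_+=\max\{x,0\}$. $W_1(Q,P_0)=\inf_{\pi}\mathbb E_{(\xi,\xi_0)\sim\pi}\|\xi-\xi_0\|_2$ over couplings $\pi$ of $Q$ and $P_0$. In the paper $Z(f,\xi)$ is the TSUE system potential under uncertain parameters $\xi$, $P_0$ the empirical distribution of $N$ observed samples, and $\Phi^{\mathrm{DRO}}_{\alpha,\lambda}$ the worst-case normalized mean–CVaR certainty equivalent. *)

theory Defs
  imports "HOL-Probability.Probability"
begin

text \<open>Paths form a finite type 'p; each path serves one OD pair (od p);
  demand w is the travel demand of OD pair w. Feasible flows: nonnegative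
  path flows satisfying OD demand conservation.\<close>
definition feasible_flows :: "('p::finite \<Rightarrow> 'w) \<Rightarrow> ('w \<Rightarrow> real) \<Rightarrow> ('p \<Rightarrow> real) set" where
  "feasible_flows od demand =
     {f. (\<forall>p. 0 \<le> f p) \<and> (\<forall>w. (\<Sum>p | od p = w. f p) = demand w)}"

definition XiSpace :: "'a::euclidean_space set \<Rightarrow> 'a measure" where
  "XiSpace Xi = restrict_space borel Xi"

definition dists_on :: "'a::euclidean_space set \<Rightarrow> 'a measure set" where
  "dists_on Xi = {Q. prob_space Q \<and> sets Q = sets (XiSpace Xi)}"

definition empirical :: "'a::euclidean_space set \<Rightarrow> nat \<Rightarrow> (nat \<Rightarrow> 'a) \<Rightarrow> 'a measure" where
  "empirical Xi N xi0 = distr (uniform_count_measure {..<N}) (XiSpace Xi) xi0"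

definition couplings :: "'a::euclidean_space set \<Rightarrow> 'a measure \<Rightarrow> 'a measure \<Rightarrow> ('a \<times> 'a) measure set" where
  "couplings Xi Q P = {\<pi>. prob_space \<pi> \<and> sets \<pi> = sets (XiSpace Xi \<Otimes>\<^sub>M XiSpace Xi)
      \<and> distr \<pi> (XiSpace Xi) fst = Q \<and> distr \<pi> (XiSpace Xi) snd = P}"

definition W1 :: "'a::euclidean_space set \<Rightarrow> 'a measure \<Rightarrow> 'a measure \<Rightarrow> ennreal" where
  "W1 Xi Q P = (INF \<pi>\<in>couplings Xi Q P. \<integral>\<^sup>+ z. ennreal (norm (fst z - snd z)) \<partial>\<pi>)"

definition wass_ball :: "'a::euclidean_space set \<Rightarrow> nat \<Rightarrow> (nat \<Rightarrow> 'a) \<Rightarrow> real \<Rightarrow> 'a measure set" where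
  "wass_ball Xi N xi0 \<rho> = {Q \<in> dists_on Xi. W1 Xi Q (empirical Xi N xi0) \<le> ennreal \<rho>}"

definition CVaR :: "real \<Rightarrow> 'a measure \<Rightarrow> ('a \<Rightarrow> real) \<Rightarrow> real" where
  "CVaR \<alpha> Q Y = (INF \<gamma>. \<gamma> + 1 / (1 - \<alpha>) * (\<integral>\<xi>. max (Y \<xi> - \<gamma>) 0 \<partial>Q))"

definition lambda_bar :: "real \<Rightarrow> real \<Rightarrow> real" where
  "lambda_bar \<alpha> lam = (\<alpha> - lam) / (1 + \<alpha> - 2 * lam)"

definition Phi_DRO :: "'a::euclidean_space set \<Rightarrow> nat \<Rightarrow> (nat \<Rightarrow> 'a) \<Rightarrow> real \<Rightarrow> real \<Rightarrow> real
    \<Rightarrow> ('a \<Rightarrow> real) \<Rightarrow> ereal" where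
  "Phi_DRO Xi N xi0 \<rho> \<alpha> lam Y =
     (SUP Q\<in>wass_ball Xi N xi0 \<rho>.
        ereal ((1 - lambda_bar \<alpha> lam) * (\<integral>\<xi>. Y \<xi> \<partial>Q) + lambda_bar \<alpha> lam * CVaR \<alpha> Q Y))"

definition g_fun :: "real \<Rightarrow> real \<Rightarrow> real \<Rightarrow> real \<Rightarrow> real" where
  "g_fun \<alpha> lam t z = (1 - lambda_bar \<alpha> lam) * z + lambda_bar \<alpha> lam / (1 - \<alpha>) * max (z - t) 0"

definition usc_on :: "'a::topological_space set \<Rightarrow> ('a \<Rightarrow> real) \<Rightarrow> bool" where
  "usc_on S h = (\<forall>x\<in>S. \<forall>c. h x < c \<longrightarrow> (\<forall>\<^sub>F y in at x within S. h y < c))"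

text \<open>Upper semicontinuity of an extended-real function on the whole space
  (equivalently: its negative is lower semicontinuous).\<close>
definition usc_ereal :: "('a::topological_space \<Rightarrow> ereal) \<Rightarrow> bool" where
  "usc_ereal h = (\<forall>x c. h x < c \<longrightarrow> (\<forall>\<^sub>F y in at x. h y < c))"

text \<open>-l is a proper convex function (values in R \<union> {+\<infinity>}, not identically +\<infinity>,
  convex on its effective domain), stated in terms of l.\<close>
definition neg_proper_convex :: "('a::real_vector \<Rightarrow> ereal) \<Rightarrow> bool" where
  "neg_proper_convex l =
     ((\<forall>x. l x < \<infinity>) \<and> (\<exists>x. l x > -\<infinity>) \<and>
      (\<forall>x y u. l x > -\<infinity> \<longrightarrow> l y > -\<infinity> \<longrightarrow> 0 \<le> u \<longrightarrow> u \<le> 1 \<longrightarrow>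
         ereal u * l x + ereal (1 - u) * l y \<le> l (u *\<^sub>R x + (1 - u) *\<^sub>R y)))"

definition piecewise_concave_on :: "'a::euclidean_space set \<Rightarrow> ('a \<Rightarrow> real) \<Rightarrow> bool" where
  "piecewise_concave_on Xi h =
     (\<exists>J::nat. \<exists>l::nat \<Rightarrow> 'a \<Rightarrow> ereal. 0 < J \<and>
        (\<forall>j<J. neg_proper_convex (l j) \<and> usc_ereal (l j) \<and> (\<exists>\<xi>\<in>Xi. l j \<xi> \<noteq> -\<infinity>)) \<and>
        (\<forall>\<xi>\<in>Xi. ereal (h \<xi>) = (MAX j\<in>{..<J}. l j \<xi>)))"

end

theory Submission
  imports Defs
begin


lemma supergrad:
  fixes cost val :: "'b \<Rightarrow> real" and Pl :: "'b set" and V \<rho> :: real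
  assumes mix: "\<And>p q u. p\<in>Pl \<Longrightarrow> q\<in>Pl \<Longrightarrow> 0\<le>u \<Longrightarrow> u\<le>1 \<Longrightarrow>
        \<exists>r\<in>Pl. cost r = u * cost p + (1-u) * cost q \<and> val r = u * val p + (1-u) * val q"
    and V: "\<And>p. p\<in>Pl \<Longrightarrow> cost p \<le> \<rho> \<Longrightarrow> val p \<le> V"
    and p0: "p0 \<in> Pl" "cost p0 < \<rho>"
  shows "\<exists>\<kappa>\<ge>0. \<forall>p\<in>Pl. val p \<le> V + \<kappa>*(cost p - \<rho>)"
proof -
  have K: "(val p - V)/(cost p - \<rho>) \<le> (V - val q)/(\<rho> - cost q)"
    if p: "p\<in>Pl" "cost p > \<rho>" and q: "q\<in>Pl" "cost q < \<rho>" for p q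
  proof -
    define u where "u = (cost p - \<rho>)/(cost p - cost q)"
    have u01: "0 \<le> u" "u \<le> 1" using p q by (auto simp: u_def field_simps)
    obtain r where r: "r\<in>Pl" "cost r = u * cost q + (1-u) * cost p" "val r = u * val q + (1-u) * val p"
      using mix[OF q(1) p(1) u01] by blast
    have uu: "u * (cost p - cost q) = cost p - \<rho>" using p q by (simp add: u_def)
    have "cost r = \<rho>" unfolding r using uu by (simp add: algebra_simps)
    hence "val r \<le> V" using V r(1) by simp
    hence "u * val q + (1-u) * val p \<le> V" using r by simp
    hence "(u * val q + (1-u) * val p) * (cost p - cost q) \<le> V * (cost p - cost q)"
      using p q by (intro mult_right_mono) auto
    moreover have "(u * val q + (1-u) * val p) * (cost p - cost q) =
       (u * (cost p - cost q)) * val q + (cost p - cost q) * val p - (u * (cost p - cost q)) * val p"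
      by (simp add: algebra_simps)
    ultimately have "(cost p - \<rho>) * val q + (\<rho> - cost q) * val p \<le> V * (cost p - cost q)"
      unfolding uu by (simp add: algebra_simps)
    hence "(val p - V) * (\<rho> - cost q) \<le> (V - val q) * (cost p - \<rho>)"
      by (simp add: algebra_simps)
    thus ?thesis using p q by (simp add: field_simps)
  qed
  define S where "S = insert 0 ((\<lambda>p. (val p - V)/(cost p - \<rho>)) ` {p\<in>Pl. cost p > \<rho>})"
  define \<kappa> where "\<kappa> = Sup S"
  have v0: "val p0 \<le> V" using V p0 by simp
  have bdd: "bdd_above S" unfolding S_def bdd_above_def
    using K[OF _ _ p0] v0 p0 by (intro exI[of _ "(V - val p0)/(\<rho> - cost p0)"]) auto
  have k0: "0 \<le> \<kappa>" unfolding \<kappa>_def by (rule cSup_upper[OF _ bdd]) (simp add: S_def)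
  show ?thesis
  proof (intro exI[of _ \<kappa>] conjI k0 ballI)
    fix p assume p: "p \<in> Pl"
    consider "cost p > \<rho>" | "cost p = \<rho>" | "cost p < \<rho>" by linarith
    thus "val p \<le> V + \<kappa>*(cost p - \<rho>)"
    proof cases
      case 1
      have "(val p - V)/(cost p - \<rho>) \<le> \<kappa>" unfolding \<kappa>_def
        by (rule cSup_upper[OF _ bdd]) (use p 1 in \<open>auto simp: S_def\<close>)
      thus ?thesis using 1 by (simp add: field_simps)
    next
      case 2 thus ?thesis using V p by simp
    next
      case 3
      have vp: "val p \<le> V" using V p 3 by simp
      have "\<kappa> \<le> (V - val p)/(\<rho> - cost p)" unfolding \<kappa>_def
        by (rule cSup_least) (use K[OF _ _ p 3] vp 3 in \<open>auto simp: S_def\<close>)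
      thus ?thesis using 3 by (simp add: field_simps)
    qed
  qed
qed



lemma sum_SUP_le:
  fixes a :: "nat \<Rightarrow> 'a \<Rightarrow> real" and X :: "'a set" and I :: "nat set"
  assumes "finite I" "X \<noteq> {}"
    and "\<And>\<zeta>. (\<forall>i\<in>I. \<zeta> i \<in> X) \<Longrightarrow> (\<Sum>i\<in>I. a i (\<zeta> i)) \<le> B"
  shows "(\<Sum>i\<in>I. SUP x\<in>X. ereal (a i x)) \<le> ereal B"
  using assms
proof (induction I arbitrary: B rule: finite_induct)
  case empty
  then obtain x where "x \<in> X" by blast
  then show ?case using empty(2)[of "\<lambda>_. x"] by simp
next
  case (insert j I)
  obtain x0 where x0: "x0 \<in> X" using insert by blast
  define T where "T = (\<Sum>i\<in>I. SUP x\<in>X. ereal (a i x))"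
  have IH: "T \<le> ereal (B - a j x)" if x: "x \<in> X" for x
    unfolding T_def
  proof (rule insert.IH[OF insert.prems(1)])
    fix \<zeta> assume z: "\<forall>i\<in>I. \<zeta> i \<in> X"
    have "(\<Sum>i\<in>insert j I. a i ((\<zeta>(j:=x)) i)) \<le> B"
      using z x by (intro insert.prems(2)) auto
    moreover have "(\<Sum>i\<in>insert j I. a i ((\<zeta>(j:=x)) i)) = a j x + (\<Sum>i\<in>I. a i (\<zeta> i))"
      using insert.hyps by (simp add: sum.insert) (intro sum.cong, auto)
    ultimately show "(\<Sum>i\<in>I. a i (\<zeta> i)) \<le> B - a j x" by simp
  qed
  have "ereal (\<Sum>i\<in>I. a i x0) \<le> T"
    unfolding T_def sum_ereal[symmetric]
    by (intro sum_mono SUP_upper x0)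
  with IH[OF x0] obtain r where r: "T = ereal r"
    by (cases T) auto
  have "(SUP x\<in>X. ereal (a j x)) \<le> ereal (B - r)"
    using IH r by (intro SUP_least) force
  hence "(SUP x\<in>X. ereal (a j x)) + ereal r \<le> ereal (B - r) + ereal r"
    by (rule add_right_mono)
  hence "(SUP x\<in>X. ereal (a j x)) + T \<le> ereal B" using r by simp
  thus ?case using insert.hyps by (simp add: sum.insert T_def)
qed



lemma space_XiSpace[simp]: "space (XiSpace Xi) = Xi"
  by (simp add: XiSpace_def space_restrict_space)

lemma XiSpace_borel[measurable]: "(\<lambda>x. x) \<in> XiSpace Xi \<rightarrow>\<^sub>M borel"
  unfolding XiSpace_def by (rule measurable_restrict_space1) simp

lemma pair_norm_meas[measurable]:
  "(\<lambda>z. norm (fst z - snd z)) \<in> borel_measurable (XiSpace Xi \<Otimes>\<^sub>M XiSpace Xi)"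
proof -
  have "fst \<in> XiSpace Xi \<Otimes>\<^sub>M XiSpace Xi \<rightarrow>\<^sub>M borel"
    using measurable_compose[OF measurable_fst XiSpace_borel] by (simp add: comp_def)
  moreover have "snd \<in> XiSpace Xi \<Otimes>\<^sub>M XiSpace Xi \<rightarrow>\<^sub>M borel"
    using measurable_compose[OF measurable_snd XiSpace_borel] by (simp add: comp_def)
  ultimately show ?thesis by measurable
qed

definition plans :: "'a::euclidean_space set \<Rightarrow> nat \<Rightarrow> (nat \<times> 'a) pmf set" where
  "plans Xi N = {P. finite (set_pmf P) \<and> set_pmf P \<subseteq> {..<N} \<times> Xi \<and> map_pmf fst P = pmf_of_set {..<N}}"

definition Hm :: "'a set \<Rightarrow> nat \<Rightarrow> (nat \<Rightarrow> 'a) \<Rightarrow> nat \<times> 'a \<Rightarrow> 'a \<times> 'a" where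
  "Hm Xi N xi0 x = (if fst x < N \<and> snd x \<in> Xi then (snd x, xi0 (fst x)) else (xi0 0, xi0 0))"

definition Qp :: "'a::euclidean_space set \<Rightarrow> nat \<Rightarrow> (nat \<Rightarrow> 'a) \<Rightarrow> (nat \<times> 'a) pmf \<Rightarrow> 'a measure" where
  "Qp Xi N xi0 P = distr (measure_pmf P) (XiSpace Xi) (\<lambda>x. fst (Hm Xi N xi0 x))"

definition costp :: "(nat \<Rightarrow> 'a::euclidean_space) \<Rightarrow> (nat \<times> 'a) pmf \<Rightarrow> real" where
  "costp xi0 P = (\<integral>x. norm (snd x - xi0 (fst x)) \<partial>measure_pmf P)"

context
  fixes Xi :: "'a::euclidean_space set" and N :: nat and xi0 :: "nat \<Rightarrow> 'a"
  assumes N_pos: "0 < N" and samples: "\<forall>i<N. xi0 i \<in> Xi"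
begin

lemma x00: "xi0 0 \<in> Xi" using N_pos samples by auto

lemma Hm_in: "Hm Xi N xi0 x \<in> Xi \<times> Xi"
  using x00 samples by (auto simp: Hm_def)

lemma Hm_meas: "Hm Xi N xi0 \<in> measure_pmf P \<rightarrow>\<^sub>M XiSpace Xi \<Otimes>\<^sub>M XiSpace Xi"
  using Hm_in by (simp add: space_pair_measure)

lemma fstHm_meas: "(\<lambda>x. fst (Hm Xi N xi0 x)) \<in> measure_pmf P \<rightarrow>\<^sub>M XiSpace Xi"
  using Hm_in by (force simp: mem_Times_iff)

lemma Qp_int:
  assumes P: "P \<in> plans Xi N" and h: "(h :: 'a \<Rightarrow> real) \<in> borel_measurable (XiSpace Xi)"
  shows "(\<integral>\<xi>. h \<xi> \<partial>Qp Xi N xi0 P) = (\<integral>x. h (snd x) \<partial>measure_pmf P)"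
proof -
  have "(\<integral>\<xi>. h \<xi> \<partial>Qp Xi N xi0 P) = (\<integral>x. h (fst (Hm Xi N xi0 x)) \<partial>measure_pmf P)"
    unfolding Qp_def by (rule integral_distr[OF fstHm_meas h])
  also have "\<dots> = (\<integral>x. h (snd x) \<partial>measure_pmf P)"
    using P by (intro integral_cong_AE) (auto simp: AE_measure_pmf_iff plans_def Hm_def)
  finally show ?thesis .
qed

lemma Qp_ball:
  assumes P: "P \<in> plans Xi N" and c: "costp xi0 P \<le> \<rho>"
  shows "Qp Xi N xi0 P \<in> wass_ball Xi N xi0 \<rho>"
proof -
  define \<pi> where "\<pi> = distr (measure_pmf P) (XiSpace Xi \<Otimes>\<^sub>M XiSpace Xi) (Hm Xi N xi0)"
  have Pp: "prob_space (measure_pmf P)" by (rule prob_space_measure_pmf)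
  have dist: "Qp Xi N xi0 P \<in> dists_on Xi"
    unfolding dists_on_def Qp_def using prob_space.prob_space_distr[OF Pp fstHm_meas] by simp
  have pip: "prob_space \<pi>" unfolding \<pi>_def using prob_space.prob_space_distr[OF Pp Hm_meas] .
  have m1: "distr \<pi> (XiSpace Xi) fst = Qp Xi N xi0 P"
    unfolding \<pi>_def Qp_def
    by (subst distr_distr[OF measurable_fst Hm_meas]) (simp add: comp_def)
  define k where "k i = (if i < N then xi0 i else xi0 0)" for i
  have k_in: "k i \<in> Xi" for i using x00 samples by (auto simp: k_def)
  have m2: "distr \<pi> (XiSpace Xi) snd = empirical Xi N xi0"
  proof -
    have "distr \<pi> (XiSpace Xi) snd = distr (measure_pmf P) (XiSpace Xi) (\<lambda>x. snd (Hm Xi N xi0 x))"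
      unfolding \<pi>_def by (subst distr_distr[OF measurable_snd Hm_meas]) (simp add: comp_def)
    also have "\<dots> = distr (measure_pmf P) (XiSpace Xi) (\<lambda>x. k (fst x))"
      using P k_in Hm_in x00 samples by (intro distr_cong_AE) (auto simp: AE_measure_pmf_iff plans_def Hm_def k_def)
    also have "\<dots> = distr (distr (measure_pmf P) (count_space UNIV) fst) (XiSpace Xi) k"
      using k_in by (subst distr_distr) (auto simp: comp_def)
    also have "\<dots> = distr (measure_pmf (pmf_of_set {..<N})) (XiSpace Xi) k"
      using P by (simp add: plans_def map_pmf_rep_eq[symmetric])
    also have "\<dots> = empirical Xi N xi0"
      unfolding empirical_def
    proof (rule measure_eqI)
      fix A assume A: "A \<in> sets (distr (measure_pmf (pmf_of_set {..<N})) (XiSpace Xi) k)"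
      have "xi0 \<in> uniform_count_measure {..<N} \<rightarrow>\<^sub>M XiSpace Xi"
        using samples by (auto simp: measurable_def space_uniform_count_measure sets_uniform_count_measure)
      moreover have "{..<N} \<inter> k -` A = xi0 -` A \<inter> {..<N}" by (auto simp: k_def)
      moreover have "emeasure (measure_pmf (pmf_of_set {..<N})) (k -` A) = card ({..<N} \<inter> k -` A) / card {..<N}"
        by (rule emeasure_pmf_of_set) (use N_pos in auto)
      ultimately show "emeasure (distr (measure_pmf (pmf_of_set {..<N})) (XiSpace Xi) k) A =
          emeasure (distr (uniform_count_measure {..<N}) (XiSpace Xi) xi0) A"
        using A k_in N_pos
        by (simp add: emeasure_distr emeasure_pmf_of_set emeasure_uniform_count_measure
            space_uniform_count_measure)
    qed simp
    finally show ?thesis .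
  qed
  have cpl: "\<pi> \<in> couplings Xi (Qp Xi N xi0 P) (empirical Xi N xi0)"
    unfolding couplings_def using pip m1 m2 by (simp add: \<pi>_def)
  have "W1 Xi (Qp Xi N xi0 P) (empirical Xi N xi0) \<le> (\<integral>\<^sup>+ z. ennreal (norm (fst z - snd z)) \<partial>\<pi>)"
    unfolding W1_def by (rule INF_lower[OF cpl])
  also have "\<dots> = (\<integral>\<^sup>+ x. ennreal (norm (fst (Hm Xi N xi0 x) - snd (Hm Xi N xi0 x))) \<partial>measure_pmf P)"
    unfolding \<pi>_def by (subst nn_integral_distr[OF Hm_meas]) auto
  also have "\<dots> = (\<integral>\<^sup>+ x. ennreal (norm (snd x - xi0 (fst x))) \<partial>measure_pmf P)"
    using P by (intro nn_integral_cong_AE) (auto simp: AE_measure_pmf_iff plans_def Hm_def)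
  also have "\<dots> = ennreal (costp xi0 P)"
    unfolding costp_def using P
    by (intro nn_integral_eq_integral integrable_measure_pmf_finite) (auto simp: plans_def)
  also have "\<dots> \<le> ennreal \<rho>" using c by (rule ennreal_leI)
  finally show ?thesis using dist by (simp add: wass_ball_def)
qed

end


lemma plan_mix:
  assumes P1: "P1 \<in> plans Xi N" and P2: "P2 \<in> plans Xi N" and u: "0 \<le> u" "u \<le> 1"
  shows "\<exists>M\<in>plans Xi N. \<forall>f::nat \<times> 'a::euclidean_space \<Rightarrow> real.
            (\<integral>x. f x \<partial>measure_pmf M) = u * (\<integral>x. f x \<partial>measure_pmf P1) + (1-u) * (\<integral>x. f x \<partial>measure_pmf P2)"
proof -
  define M where "M = bind_pmf (bernoulli_pmf u) (\<lambda>b. if b then P1 else P2)"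
  define A where "A = set_pmf P1 \<union> set_pmf P2"
  have fA: "finite A" using P1 P2 by (auto simp: A_def plans_def)
  have sM: "set_pmf M \<subseteq> A" unfolding M_def A_def by (auto split: if_splits)
  have pM: "pmf M a = u * pmf P1 a + (1-u) * pmf P2 a" for a
    unfolding M_def pmf_bind using u by simp
  have "map_pmf fst M = bind_pmf (bernoulli_pmf u) (\<lambda>b. pmf_of_set {..<N})"
    unfolding M_def map_bind_pmf using P1 P2
    by (intro bind_pmf_cong) (auto simp: plans_def)
  hence mf: "map_pmf fst M = pmf_of_set {..<N}" by simp
  have Mp: "M \<in> plans Xi N" unfolding plans_def using sM fA P1 P2 mf
    by (auto simp: A_def plans_def intro: finite_subset)
  have "(\<integral>x. f x \<partial>measure_pmf M) = u * (\<integral>x. f x \<partial>measure_pmf P1) + (1-u) * (\<integral>x. f x \<partial>measure_pmf P2)"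
    for f :: "nat \<times> 'a \<Rightarrow> real"
  proof -
    have "(\<integral>x. f x \<partial>measure_pmf M) = (\<Sum>a\<in>A. f a * pmf M a)"
      using sM fA by (intro integral_measure_pmf_real) auto
    moreover have "(\<integral>x. f x \<partial>measure_pmf P1) = (\<Sum>a\<in>A. f a * pmf P1 a)"
      using fA by (intro integral_measure_pmf_real) (auto simp: A_def)
    moreover have "(\<integral>x. f x \<partial>measure_pmf P2) = (\<Sum>a\<in>A. f a * pmf P2 a)"
      using fA by (intro integral_measure_pmf_real) (auto simp: A_def)
    ultimately show ?thesis
      by (simp add: pM sum_distrib_left sum.distrib[symmetric] algebra_simps)
  qed
  thus ?thesis using Mp by blast
qed

lemma pure_plan:
  assumes N: "0 < N" and z: "\<forall>i<N. \<zeta> i \<in> Xi"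
  shows "map_pmf (\<lambda>i. (i, \<zeta> i)) (pmf_of_set {..<N}) \<in> plans Xi N"
    and "\<And>f::nat \<times> 'a::euclidean_space \<Rightarrow> real.
      (\<integral>x. f x \<partial>measure_pmf (map_pmf (\<lambda>i. (i, \<zeta> i)) (pmf_of_set {..<N}))) = (\<Sum>i<N. f (i, \<zeta> i)) / N"
proof -
  show "map_pmf (\<lambda>i. (i, \<zeta> i)) (pmf_of_set {..<N}) \<in> plans Xi N"
  proof -
    have "set_pmf (pmf_of_set {..<N}) = {..<N}" using N by (intro set_pmf_of_set) auto
    thus ?thesis using N z by (auto simp: plans_def map_pmf_comp)
  qed
  show "(\<integral>x. f x \<partial>measure_pmf (map_pmf (\<lambda>i. (i, \<zeta> i)) (pmf_of_set {..<N}))) = (\<Sum>i<N. f (i, \<zeta> i)) / N"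
    for f :: "nat \<times> 'a \<Rightarrow> real"
  proof -
    have "(\<integral>i. f (i, \<zeta> i) \<partial>measure_pmf (pmf_of_set {..<N})) = (\<Sum>i<N. f (i, \<zeta> i)) / card {..<N}"
      by (rule integral_pmf_of_set) (use N in auto)
    thus ?thesis by simp
  qed
qed



lemma strong_dual:
  fixes Xi :: "'a::euclidean_space set" and G :: "'a \<Rightarrow> real"
  assumes N_pos: "0 < N" and samples: "\<forall>i<N. xi0 i \<in> Xi" and rho_pos: "0 < \<rho>"
    and G: "G \<in> borel_measurable (XiSpace Xi)"
  shows "(INF \<kappa>\<in>{0..}. ereal (c + \<kappa> * \<rho>) + ereal (1 / real N) *
            (\<Sum>i<N. SUP \<xi>\<in>Xi. ereal (G \<xi> - \<kappa> * norm (\<xi> - xi0 i))))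
         \<le> (SUP Q\<in>wass_ball Xi N xi0 \<rho>. ereal (c + (\<integral>\<xi>. G \<xi> \<partial>Q)))"
    (is "?L \<le> ?R")
proof -
  define val where "val P = (\<integral>x. G (snd x) \<partial>measure_pmf P)" for P :: "(nat \<times> 'a) pmf"
  define P0 where "P0 = map_pmf (\<lambda>i. (i, xi0 i)) (pmf_of_set {..<N})"
  have P0: "P0 \<in> plans Xi N" unfolding P0_def by (rule pure_plan(1)[OF N_pos samples])
  have c0: "costp xi0 P0 = 0" unfolding P0_def costp_def
    by (subst pure_plan(2)[OF N_pos samples]) simp
  have valR: "ereal (c + val P) \<le> ?R" if P: "P \<in> plans Xi N" "costp xi0 P \<le> \<rho>" for P
  proof -
    have "Qp Xi N xi0 P \<in> wass_ball Xi N xi0 \<rho>" by (rule Qp_ball[OF N_pos samples P])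
    hence "ereal (c + (\<integral>\<xi>. G \<xi> \<partial>Qp Xi N xi0 P)) \<le> ?R" by (rule SUP_upper)
    thus ?thesis using Qp_int[OF N_pos samples P(1) G] by (simp add: val_def)
  qed
  show ?thesis
  proof (cases "?R = \<infinity>")
    case True thus ?thesis by simp
  next
    case False
    have "ereal (c + val P0) \<le> ?R" using valR[OF P0] c0 rho_pos by simp
    with False obtain V' where V': "?R = ereal V'" by (cases ?R) auto
    define V where "V = V' - c"
    have V: "?R = ereal (c + V)" using V' by (simp add: V_def)
    have Vb: "val P \<le> V" if "P \<in> plans Xi N" "costp xi0 P \<le> \<rho>" for P
      using valR[OF that] V by simp
    have "\<exists>\<kappa>\<ge>0. \<forall>p\<in>plans Xi N. val p \<le> V + \<kappa> * (costp xi0 p - \<rho>)"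
    proof (rule supergrad[OF _ Vb P0])
      fix p q and u :: real assume "p \<in> plans Xi N" "q \<in> plans Xi N" "0 \<le> u" "u \<le> 1"
      from plan_mix[OF this] obtain M where "M \<in> plans Xi N" and
        "\<And>f::nat \<times> 'a \<Rightarrow> real. (\<integral>x. f x \<partial>measure_pmf M) = u * (\<integral>x. f x \<partial>measure_pmf p) + (1-u) * (\<integral>x. f x \<partial>measure_pmf q)"
        by blast
      thus "\<exists>r\<in>plans Xi N. costp xi0 r = u * costp xi0 p + (1 - u) * costp xi0 q \<and> val r = u * val p + (1 - u) * val q"
        unfolding costp_def val_def by blast
    qed (use c0 rho_pos in auto)
    then obtain \<kappa> where k0: "\<kappa> \<ge> 0" and kb: "\<And>p. p\<in>plans Xi N \<Longrightarrow> val p \<le> V + \<kappa> * (costp xi0 p - \<rho>)"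
      by blast
    have "(\<Sum>i<N. SUP \<xi>\<in>Xi. ereal (G \<xi> - \<kappa> * norm (\<xi> - xi0 i))) \<le> ereal (N * (V - \<kappa> * \<rho>))"
    proof (rule sum_SUP_le)
      show "Xi \<noteq> {}" using samples N_pos by auto
      fix \<zeta> assume z: "\<forall>i\<in>{..<N}. \<zeta> i \<in> Xi"
      hence z': "\<forall>i<N. \<zeta> i \<in> Xi" by auto
      have "val (map_pmf (\<lambda>i. (i, \<zeta> i)) (pmf_of_set {..<N})) \<le>
          V + \<kappa> * (costp xi0 (map_pmf (\<lambda>i. (i, \<zeta> i)) (pmf_of_set {..<N})) - \<rho>)"
        by (rule kb[OF pure_plan(1)[OF N_pos z']])
      hence "(\<Sum>i<N. G (\<zeta> i)) / N \<le> V + \<kappa> * ((\<Sum>i<N. norm (\<zeta> i - xi0 i)) / N - \<rho>)"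
        unfolding val_def costp_def pure_plan(2)[OF N_pos z'] by simp
      hence "(\<Sum>i<N. G (\<zeta> i)) \<le> N * V + \<kappa> * ((\<Sum>i<N. norm (\<zeta> i - xi0 i)) - N * \<rho>)"
        using N_pos by (simp add: field_simps)
      thus "(\<Sum>i<N. G (\<zeta> i) - \<kappa> * norm (\<zeta> i - xi0 i)) \<le> N * (V - \<kappa> * \<rho>)"
        by (simp add: sum_subtractf sum_distrib_left algebra_simps)
    qed simp
    hence "ereal (1 / real N) * (\<Sum>i<N. SUP \<xi>\<in>Xi. ereal (G \<xi> - \<kappa> * norm (\<xi> - xi0 i)))
        \<le> ereal (1 / real N) * ereal (N * (V - \<kappa> * \<rho>))"
      by (rule ereal_mult_left_mono) simp
    also have "\<dots> = ereal (V - \<kappa> * \<rho>)" using N_pos by simp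
    finally have "?L \<le> ereal (c + \<kappa> * \<rho>) + ereal (V - \<kappa> * \<rho>)"
      using k0 by (intro INF_lower2[of \<kappa>] add_left_mono) auto
    thus ?thesis using V by simp
  qed
qed



context
  fixes Xi :: "'a::euclidean_space set" and N :: nat and xi0 :: "nat \<Rightarrow> 'a"
  assumes Xi_closed: "closed Xi" and N_pos: "0 < N" and samples: "\<forall>i<N. xi0 i \<in> Xi"
begin

lemma S_sets: "xi0 ` {..<N} \<in> sets (XiSpace Xi)"
proof -
  have "closed (xi0 ` {..<N})" by (intro finite_imp_closed) auto
  hence "xi0 ` {..<N} \<in> sets borel" by simp
  moreover have "Xi \<inter> space borel \<in> sets borel" using Xi_closed by simp
  ultimately show ?thesis unfolding XiSpace_def using samples
    by (subst sets_restrict_space_iff) auto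
qed

lemma cpl_meas:
  assumes "\<pi> \<in> couplings Xi Q P" "f \<in> XiSpace Xi \<Otimes>\<^sub>M XiSpace Xi \<rightarrow>\<^sub>M M"
  shows "f \<in> \<pi> \<rightarrow>\<^sub>M M"
  using assms measurable_cong_sets[of \<pi> "XiSpace Xi \<Otimes>\<^sub>M XiSpace Xi" M M]
  by (auto simp: couplings_def)

lemma cpl_space:
  assumes "\<pi> \<in> couplings Xi Q P"
  shows "space \<pi> = Xi \<times> Xi"
  using assms sets_eq_imp_space_eq[of \<pi> "XiSpace Xi \<Otimes>\<^sub>M XiSpace Xi"]
  by (auto simp: couplings_def space_pair_measure)

lemma cpl_AE:
  assumes cp: "\<pi> \<in> couplings Xi Q (empirical Xi N xi0)"
  shows "AE z in \<pi>. snd z \<in> xi0 ` {..<N} \<and> fst z \<in> Xi"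
proof -
  have sm: "snd \<in> \<pi> \<rightarrow>\<^sub>M XiSpace Xi" by (rule cpl_meas[OF cp measurable_snd])
  have pred: "{x \<in> space (XiSpace Xi). x \<in> xi0 ` {..<N}} \<in> sets (XiSpace Xi)"
  proof -
    have "{x \<in> space (XiSpace Xi). x \<in> xi0 ` {..<N}} = xi0 ` {..<N}" using samples by auto
    thus ?thesis using S_sets by simp
  qed
  have "AE y in empirical Xi N xi0. y \<in> xi0 ` {..<N}"
  proof -
    have xm: "xi0 \<in> uniform_count_measure {..<N} \<rightarrow>\<^sub>M XiSpace Xi"
      using samples by (auto simp: measurable_def space_uniform_count_measure sets_uniform_count_measure)
    show ?thesis unfolding empirical_def
      by (subst AE_distr_iff[OF xm pred]) (auto intro!: AE_I2 simp: space_uniform_count_measure)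
  qed
  moreover have eq: "distr \<pi> (XiSpace Xi) snd = empirical Xi N xi0" using cp by (simp add: couplings_def)
  ultimately have "AE y in distr \<pi> (XiSpace Xi) snd. y \<in> xi0 ` {..<N}"
    by (subst eq)
  hence "AE z in \<pi>. snd z \<in> xi0 ` {..<N}"
    by (subst (asm) AE_distr_iff[OF sm pred])
  moreover have "AE z in \<pi>. fst z \<in> Xi"
    by (intro AE_I2) (auto simp: cpl_space[OF cp])
  ultimately show ?thesis by auto
qed

lemma ball_cpl:
  assumes Q: "Q \<in> wass_ball Xi N xi0 \<rho>"
  shows "\<exists>\<pi>\<in>couplings Xi Q (empirical Xi N xi0).
           (\<integral>\<^sup>+ z. ennreal (norm (fst z - snd z)) \<partial>\<pi>) < \<infinity>"
proof -
  have "W1 Xi Q (empirical Xi N xi0) < \<infinity>"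
    using Q by (auto simp: wass_ball_def intro: le_less_trans)
  thus ?thesis unfolding W1_def by (simp add: INF_less_iff)
qed

lemma cpl_int_norm:
  assumes cp: "\<pi> \<in> couplings Xi Q P" and fin: "(\<integral>\<^sup>+ z. ennreal (norm (fst z - snd z)) \<partial>\<pi>) < \<infinity>"
  shows "integrable \<pi> (\<lambda>z. norm (fst z - snd z))"
  by (rule integrableI_bounded) (use fin cpl_meas[OF cp pair_norm_meas] in auto)

lemma ball_integrable:
  fixes Y :: "'a \<Rightarrow> real"
  assumes Q: "Q \<in> wass_ball Xi N xi0 \<rho>"
    and Ym: "Y \<in> borel_measurable (XiSpace Xi)"
    and Yg: "\<forall>\<xi>\<in>Xi. \<bar>Y \<xi>\<bar> \<le> C * (1 + norm \<xi>)"
  shows "integrable Q Y"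
proof -
  obtain \<pi> where cp: "\<pi> \<in> couplings Xi Q (empirical Xi N xi0)"
    and fin: "(\<integral>\<^sup>+ z. ennreal (norm (fst z - snd z)) \<partial>\<pi>) < \<infinity>"
    using ball_cpl[OF Q] by blast
  have ps: "prob_space \<pi>" using cp by (simp add: couplings_def)
  then interpret prob_space \<pi> .
  have C0: "0 \<le> C"
  proof -
    obtain x where "x \<in> Xi" using samples N_pos by blast
    hence "0 \<le> C * (1 + norm x)" using Yg by (meson abs_ge_zero order_trans)
    thus ?thesis by (simp add: zero_le_mult_iff) (smt (verit) norm_ge_zero)
  qed
  define M where "M = (\<Sum>i<N. norm (xi0 i))"
  have Mb: "norm (xi0 i) \<le> M" if "i < N" for i
    unfolding M_def using that by (intro member_le_sum) auto
  have fm: "fst \<in> \<pi> \<rightarrow>\<^sub>M XiSpace Xi" by (rule cpl_meas[OF cp measurable_fst])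
  have "integrable \<pi> (\<lambda>z. Y (fst z))"
  proof (rule Bochner_Integration.integrable_bound)
    show "integrable \<pi> (\<lambda>z. C * (1 + M + norm (fst z - snd z)))"
      using cpl_int_norm[OF cp fin] by simp
    show "(\<lambda>z. Y (fst z)) \<in> borel_measurable \<pi>" using measurable_compose[OF fm Ym] by (simp add: comp_def)
    show "AE z in \<pi>. norm (Y (fst z)) \<le> norm (C * (1 + M + norm (fst z - snd z)))"
      using cpl_AE[OF cp]
    proof eventually_elim
      case (elim z)
      then obtain i where i: "i < N" "snd z = xi0 i" by auto
      have "norm (fst z) \<le> norm (fst z - snd z) + M"
        using norm_triangle_ineq[of "fst z - snd z" "snd z"] Mb[OF i(1)] i by simp
      hence "C * (1 + norm (fst z)) \<le> C * (1 + M + norm (fst z - snd z))"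
        using C0 by (intro mult_left_mono) auto
      hence "\<bar>Y (fst z)\<bar> \<le> C * (1 + M + norm (fst z - snd z))"
        using Yg elim by (meson order_trans)
      moreover have "0 \<le> C * (1 + M + norm (fst z - snd z))"
        using C0 M_def by (simp add: sum_nonneg)
      ultimately show ?case by simp
    qed
  qed
  hence "integrable (distr \<pi> (XiSpace Xi) fst) Y"
    by (subst integrable_distr_eq[OF fm Ym])
  moreover have "distr \<pi> (XiSpace Xi) fst = Q" using cp by (simp add: couplings_def)
  ultimately show ?thesis by simp
qed

end


context
  fixes Xi :: "'a::euclidean_space set" and N :: nat and xi0 :: "nat \<Rightarrow> 'a"
  assumes Xi_closed: "closed Xi" and N_pos: "0 < N" and samples: "\<forall>i<N. xi0 i \<in> Xi"
begin

lemma weak_dual: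
  fixes G :: "'a \<Rightarrow> real" and s :: "'a \<Rightarrow> real"
  assumes Q: "Q \<in> wass_ball Xi N xi0 \<rho>" and rho: "0 \<le> \<rho>"
    and Gm: "G \<in> borel_measurable (XiSpace Xi)" and Gi: "integrable Q G" and k0: "0 \<le> \<kappa>"
    and sb: "\<forall>i<N. \<forall>\<xi>\<in>Xi. G \<xi> - \<kappa> * norm (\<xi> - xi0 i) \<le> s (xi0 i)"
  shows "(\<integral>\<xi>. G \<xi> \<partial>Q) \<le> \<kappa> * \<rho> + (\<Sum>i<N. s (xi0 i)) / N"
proof -
  define A where "A = (\<Sum>i<N. s (xi0 i)) / N"
  define S where "S = xi0 ` {..<N}"
  define \<phi> where "\<phi> y = (\<Sum>y'\<in>S. s y' * indicator {y'} y)" for y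
  have fS: "finite S" by (simp add: S_def)
  have \<phi>S: "\<phi> y = s y" if "y \<in> S" for y
  proof -
    have "\<phi> y = (\<Sum>y'\<in>S. if y' = y then s y' else 0)"
      unfolding \<phi>_def by (intro sum.cong) (auto simp: indicator_def)
    thus ?thesis using that fS by (simp add: sum.delta')
  qed
  have \<phi>b: "\<phi> \<in> borel_measurable borel" unfolding \<phi>_def by measurable
  have \<phi>m: "\<phi> \<in> borel_measurable (XiSpace Xi)"
    using measurable_compose[OF XiSpace_borel \<phi>b] by simp
  have \<phi>bd: "\<bar>\<phi> y\<bar> \<le> (\<Sum>y'\<in>S. \<bar>s y'\<bar>)" for y
    unfolding \<phi>_def by (rule order_trans[OF sum_abs]) (intro sum_mono, auto simp: indicator_def abs_mult)
  have key: "(\<integral>\<xi>. G \<xi> \<partial>Q) \<le> \<kappa> * (\<integral>z. norm (fst z - snd z) \<partial>\<pi>) + A"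
    if cp: "\<pi> \<in> couplings Xi Q (empirical Xi N xi0)"
      and fin: "(\<integral>\<^sup>+ z. ennreal (norm (fst z - snd z)) \<partial>\<pi>) < \<infinity>" for \<pi>
  proof -
    interpret prob_space \<pi> using cp by (simp add: couplings_def)
    have fm: "fst \<in> \<pi> \<rightarrow>\<^sub>M XiSpace Xi" by (rule cpl_meas[OF Xi_closed N_pos samples cp measurable_fst])
    have sm: "snd \<in> \<pi> \<rightarrow>\<^sub>M XiSpace Xi" by (rule cpl_meas[OF Xi_closed N_pos samples cp measurable_snd])
    have Qe: "distr \<pi> (XiSpace Xi) fst = Q" and Pe: "distr \<pi> (XiSpace Xi) snd = empirical Xi N xi0"
      using cp by (auto simp: couplings_def)
    have nI: "integrable \<pi> (\<lambda>z. norm (fst z - snd z))"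
      by (rule cpl_int_norm[OF Xi_closed N_pos samples cp fin])
    have \<phi>sm: "(\<lambda>z. \<phi> (snd z)) \<in> borel_measurable \<pi>"
      using measurable_compose[OF sm \<phi>m] by (simp add: comp_def)
    have \<phi>I: "integrable \<pi> (\<lambda>z. \<phi> (snd z))"
      by (rule integrable_const_bound[where B="\<Sum>y'\<in>S. \<bar>s y'\<bar>"]) (use \<phi>bd \<phi>sm in auto)
    have GI: "integrable \<pi> (\<lambda>z. G (fst z))"
      using Gi unfolding Qe[symmetric] by (subst (asm) integrable_distr_eq[OF fm Gm])
    have "(\<integral>\<xi>. G \<xi> \<partial>Q) = (\<integral>z. G (fst z) \<partial>\<pi>)"
      unfolding Qe[symmetric] by (rule integral_distr[OF fm Gm])
    also have "\<dots> \<le> (\<integral>z. \<kappa> * norm (fst z - snd z) + \<phi> (snd z) \<partial>\<pi>)"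
    proof (rule integral_mono_AE[OF GI])
      show "integrable \<pi> (\<lambda>z. \<kappa> * norm (fst z - snd z) + \<phi> (snd z))"
        using nI \<phi>I by simp
      show "AE z in \<pi>. G (fst z) \<le> \<kappa> * norm (fst z - snd z) + \<phi> (snd z)"
        using cpl_AE[OF Xi_closed N_pos samples cp]
      proof eventually_elim
        case (elim z)
        then obtain i where i: "i < N" "snd z = xi0 i" by auto
        have "\<phi> (snd z) = s (xi0 i)" using \<phi>S i by (simp add: S_def)
        thus ?case using sb i elim by force
      qed
    qed
    also have "\<dots> = \<kappa> * (\<integral>z. norm (fst z - snd z) \<partial>\<pi>) + (\<integral>z. \<phi> (snd z) \<partial>\<pi>)"
      using nI \<phi>I by simp
    also have "(\<integral>z. \<phi> (snd z) \<partial>\<pi>) = (\<integral>y. \<phi> y \<partial>empirical Xi N xi0)"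
      unfolding Pe[symmetric] by (rule integral_distr[OF sm \<phi>m, symmetric])
    also have "\<dots> = (\<integral>i. \<phi> (xi0 i) \<partial>uniform_count_measure {..<N})"
    proof -
      have xm: "xi0 \<in> uniform_count_measure {..<N} \<rightarrow>\<^sub>M XiSpace Xi"
        using samples by (auto simp: measurable_def space_uniform_count_measure sets_uniform_count_measure)
      show ?thesis unfolding empirical_def by (rule integral_distr[OF xm \<phi>m])
    qed
    also have "\<dots> = (\<Sum>i<N. \<phi> (xi0 i)) / N"
      by (simp add: integral_uniform_count_measure)
    also have "\<dots> = A" unfolding A_def using \<phi>S by (simp add: S_def)
    finally show ?thesis by simp
  qed
  show ?thesis
  proof (cases "\<kappa> = 0")
    case True
    obtain \<pi> where "\<pi> \<in> couplings Xi Q (empirical Xi N xi0)"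
      "(\<integral>\<^sup>+ z. ennreal (norm (fst z - snd z)) \<partial>\<pi>) < \<infinity>"
      using ball_cpl[OF Xi_closed N_pos samples Q] by blast
    from key[OF this] True show ?thesis by (simp add: A_def)
  next
    case False
    hence kp: "0 < \<kappa>" using k0 by simp
    define x where "x = ((\<integral>\<xi>. G \<xi> \<partial>Q) - A) / \<kappa>"
    have "ennreal x \<le> W1 Xi Q (empirical Xi N xi0)"
      unfolding W1_def
    proof (rule INF_greatest)
      fix \<pi> assume cp: "\<pi> \<in> couplings Xi Q (empirical Xi N xi0)"
      show "ennreal x \<le> (\<integral>\<^sup>+ z. ennreal (norm (fst z - snd z)) \<partial>\<pi>)"
      proof (cases "(\<integral>\<^sup>+ z. ennreal (norm (fst z - snd z)) \<partial>\<pi>) < \<infinity>")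
        case True
        have nI: "integrable \<pi> (\<lambda>z. norm (fst z - snd z))"
          by (rule cpl_int_norm[OF Xi_closed N_pos samples cp True])
        have "(\<integral>\<^sup>+ z. ennreal (norm (fst z - snd z)) \<partial>\<pi>) = ennreal (\<integral>z. norm (fst z - snd z) \<partial>\<pi>)"
          by (rule nn_integral_eq_integral[OF nI]) auto
        moreover have "x \<le> (\<integral>z. norm (fst z - snd z) \<partial>\<pi>)"
          using key[OF cp True] kp unfolding x_def by (simp add: field_simps)
        ultimately show ?thesis by (simp add: ennreal_leI)
      qed (simp add: less_top[symmetric])
    qed
    also have "\<dots> \<le> ennreal \<rho>" using Q by (simp add: wass_ball_def)
    finally have "x \<le> \<rho>" using rho by simp
    thus ?thesis using kp unfolding x_def A_def by (simp add: field_simps)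
  qed
qed

end


lemma INF_ereal_le_Inf: "(INF t. ereal (f t)) \<le> ereal (Inf (range f))"
proof (cases "INF t. ereal (f t)")
  case (real x)
  hence "x \<le> f t" for t by (metis INF_lower UNIV_I ereal_less_eq(3))
  hence "x \<le> Inf (range f)" by (intro cInf_greatest) auto
  thus ?thesis using real by simp
next
  case PInf
  hence "\<infinity> \<le> ereal (f undefined)" by (metis INF_lower UNIV_I)
  thus ?thesis by simp
qed simp

lemma lambda_bar_nonneg:
  assumes "\<alpha> < 1" "lam \<le> \<alpha>"
  shows "0 \<le> lambda_bar \<alpha> lam"
  using assms unfolding lambda_bar_def by (intro divide_nonneg_pos) auto

lemma cvar_eq:
  fixes Y :: "'a \<Rightarrow> real"
  assumes Q: "prob_space Q" and Yi: "integrable Q Y" and alpha: "0 < \<alpha>" "\<alpha> < 1" and lam: "lam \<le> \<alpha>"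
  shows "ereal ((1 - lambda_bar \<alpha> lam) * (\<integral>\<xi>. Y \<xi> \<partial>Q) + lambda_bar \<alpha> lam * CVaR \<alpha> Q Y)
       = (INF t. ereal (lambda_bar \<alpha> lam * t + (\<integral>\<xi>. g_fun \<alpha> lam t (Y \<xi>) \<partial>Q)))"
proof -
  interpret prob_space Q by (rule Q)
  define lb where "lb = lambda_bar \<alpha> lam"
  have lb0: "0 \<le> lb" unfolding lb_def by (rule lambda_bar_nonneg[OF alpha(2) lam])
  define c where "c = (1 - lb) * (\<integral>\<xi>. Y \<xi> \<partial>Q)"
  define h where "h t = t + 1 / (1 - \<alpha>) * (\<integral>\<xi>. max (Y \<xi> - t) 0 \<partial>Q)" for t
  have mI: "integrable Q (\<lambda>\<xi>. max (Y \<xi> - t) 0)" for t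
    using Yi by (intro integrable_max integrable_diff) auto
  have A: "lb * t + (\<integral>\<xi>. g_fun \<alpha> lam t (Y \<xi>) \<partial>Q) = c + lb * h t" for t
  proof -
    have "(\<integral>\<xi>. g_fun \<alpha> lam t (Y \<xi>) \<partial>Q) = (1 - lb) * (\<integral>\<xi>. Y \<xi> \<partial>Q) + lb / (1 - \<alpha>) * (\<integral>\<xi>. max (Y \<xi> - t) 0 \<partial>Q)"
      unfolding g_fun_def lb_def[symmetric] using Yi mI[of t] by simp
    thus ?thesis unfolding c_def h_def by (simp add: algebra_simps)
  qed
  have hb: "(\<integral>\<xi>. Y \<xi> \<partial>Q) \<le> h t" for t
  proof -
    have "(\<integral>\<xi>. Y \<xi> - t \<partial>Q) \<le> (\<integral>\<xi>. max (Y \<xi> - t) 0 \<partial>Q)"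
      using Yi mI by (intro integral_mono) auto
    hence "(\<integral>\<xi>. Y \<xi> \<partial>Q) - t \<le> (\<integral>\<xi>. max (Y \<xi> - t) 0 \<partial>Q)" using Yi by (simp add: prob_space)
    moreover have "(\<integral>\<xi>. max (Y \<xi> - t) 0 \<partial>Q) \<le> 1 / (1 - \<alpha>) * (\<integral>\<xi>. max (Y \<xi> - t) 0 \<partial>Q)"
    proof -
      have "0 \<le> (\<integral>\<xi>. max (Y \<xi> - t) 0 \<partial>Q)" by (intro integral_nonneg_AE) auto
      moreover have "1 \<le> 1 / (1 - \<alpha>)" using alpha by (simp add: field_simps)
      ultimately show ?thesis by (metis mult_1 mult_right_mono)
    qed
    ultimately show ?thesis unfolding h_def by simp
  qed
  have bdd: "bdd_below (range h)" using hb by (intro bdd_belowI2) 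
  have CV: "CVaR \<alpha> Q Y = Inf (range h)" unfolding CVaR_def h_def by simp
  show ?thesis
    unfolding lb_def[symmetric] c_def[symmetric] CV A
  proof (rule antisym)
    show "ereal (c + lb * Inf (range h)) \<le> (INF t. ereal (c + lb * h t))"
      using bdd lb0 by (intro INF_greatest) (simp add: cInf_lower mult_left_mono)
    show "(INF t. ereal (c + lb * h t)) \<le> ereal (c + lb * Inf (range h))"
    proof (cases "lb = 0")
      case True thus ?thesis by simp
    next
      case False
      hence lbp: "0 < lb" using lb0 by simp
      define m where "m = Inf (range (\<lambda>t. c + lb * h t))"
      have "(m - c) / lb \<le> Inf (range h)"
      proof (intro cInf_greatest)
        fix y assume "y \<in> range h"
        then obtain t where t: "y = h t" by auto
        have "m \<le> c + lb * h t" unfolding m_def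
          using bdd lbp by (intro cInf_lower) (auto intro!: bdd_belowI2[where m="c + lb * Inf (range h)"]
              simp: cInf_lower mult_left_mono)
        thus "(m - c) / lb \<le> y" using lbp t by (simp add: field_simps)
      qed auto
      hence "m \<le> c + lb * Inf (range h)" using lbp by (simp add: field_simps)
      thus ?thesis using INF_ereal_le_Inf[of "\<lambda>t. c + lb * h t"] unfolding m_def
        by (meson ereal_less_eq(3) order_trans)
    qed
  qed
qed



lemma sum_SUP_cases:
  fixes a :: "nat \<Rightarrow> 'a \<Rightarrow> real"
  assumes "X \<noteq> {}"
  shows "(\<Sum>i<N. SUP x\<in>X. ereal (a i x)) = \<infinity> \<or>
         (\<forall>i<N. (SUP x\<in>X. ereal (a i x)) = ereal (real_of_ereal (SUP x\<in>X. ereal (a i x))))"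
proof (cases "\<exists>i<N. (SUP x\<in>X. ereal (a i x)) = \<infinity>")
  case True thus ?thesis by (auto simp: sum_Pinfty)
next
  case False
  obtain x0 where x0: "x0 \<in> X" using assms by blast
  have "(SUP x\<in>X. ereal (a i x)) \<noteq> -\<infinity>" for i
  proof -
    have "ereal (a i x0) \<le> (SUP x\<in>X. ereal (a i x))" by (rule SUP_upper[OF x0])
    thus ?thesis by auto
  qed
  thus ?thesis using False by (auto intro: real_of_ereal.elims)
qed

context
  fixes Xi :: "'a::euclidean_space set" and N :: nat and xi0 :: "nat \<Rightarrow> 'a"
    and \<rho> \<alpha> lam :: real and Y :: "'a \<Rightarrow> real" and C :: real
  assumes Xi_closed: "closed Xi" and N_pos: "0 < N" and samples: "\<forall>i<N. xi0 i \<in> Xi"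
    and rho_pos: "0 < \<rho>" and alpha: "0 < \<alpha>" "\<alpha> < 1" and lam: "lam \<le> \<alpha>"
    and Ym: "Y \<in> borel_measurable (XiSpace Xi)"
    and Yg: "\<forall>\<xi>\<in>Xi. \<bar>Y \<xi>\<bar> \<le> C * (1 + norm \<xi>)"
begin

abbreviation "lb \<equiv> lambda_bar \<alpha> lam"
abbreviation "Gf t \<xi> \<equiv> g_fun \<alpha> lam t (Y \<xi>)"
abbreviation "Ssup t \<kappa> i \<equiv> (SUP \<xi>\<in>Xi. ereal (g_fun \<alpha> lam t (Y \<xi>) - \<kappa> * norm (\<xi> - xi0 i)))"
abbreviation "Dual t \<kappa> \<equiv> ereal (lb * t + \<kappa> * \<rho>) + ereal (1 / real N) * (\<Sum>i<N. Ssup t \<kappa> i)"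

lemma Xi_ne: "Xi \<noteq> {}" using N_pos samples by auto

lemma Gm: "(\<lambda>\<xi>. g_fun \<alpha> lam t (Y \<xi>)) \<in> borel_measurable (XiSpace Xi)"
  unfolding g_fun_def using Ym by measurable

lemma Q_facts:
  assumes Q: "Q \<in> wass_ball Xi N xi0 \<rho>"
  shows "prob_space Q" "integrable Q Y" "integrable Q (\<lambda>\<xi>. g_fun \<alpha> lam t (Y \<xi>))"
proof -
  show ps: "prob_space Q" using Q by (simp add: wass_ball_def dists_on_def)
  show Yi: "integrable Q Y" by (rule ball_integrable[OF Xi_closed N_pos samples Q Ym Yg])
  interpret prob_space Q by (rule ps)
  have mI: "integrable Q (\<lambda>\<xi>. max (Y \<xi> - t) 0)"
    using Yi by (intro integrable_max integrable_diff) auto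
  show "integrable Q (\<lambda>\<xi>. g_fun \<alpha> lam t (Y \<xi>))"
    unfolding g_fun_def using Yi mI by simp
qed

lemma Dual_cases:
  "Dual t \<kappa> = \<infinity> \<or> (\<forall>i<N. Ssup t \<kappa> i = ereal (real_of_ereal (Ssup t \<kappa> i)))"
proof -
  from sum_SUP_cases[OF Xi_ne, of "\<lambda>i \<xi>. g_fun \<alpha> lam t (Y \<xi>) - \<kappa> * norm (\<xi> - xi0 i)" N]
  show ?thesis
  proof
    assume "(\<Sum>i<N. Ssup t \<kappa> i) = \<infinity>"
    thus ?thesis using N_pos by simp
  qed simp
qed

lemma Dual_fin:
  assumes "\<forall>i<N. Ssup t \<kappa> i = ereal (real_of_ereal (Ssup t \<kappa> i))"
  shows "Dual t \<kappa> = ereal (lb * t + \<kappa> * \<rho> + 1 / real N * (\<Sum>i<N. real_of_ereal (Ssup t \<kappa> i)))"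
proof -
  have "(\<Sum>i<N. Ssup t \<kappa> i) = (\<Sum>i<N. ereal (real_of_ereal (Ssup t \<kappa> i)))"
    using assms by (intro sum.cong) auto
  thus ?thesis by simp
qed


lemma wd_step:
  assumes Q: "Q \<in> wass_ball Xi N xi0 \<rho>" and k0: "0 \<le> \<kappa>"
  shows "ereal (lb * t + (\<integral>\<xi>. g_fun \<alpha> lam t (Y \<xi>) \<partial>Q)) \<le> Dual t \<kappa>"
  using Dual_cases[of t \<kappa>]
proof
  assume "Dual t \<kappa> = \<infinity>" thus ?thesis by simp
next
  assume fin: "\<forall>i<N. Ssup t \<kappa> i = ereal (real_of_ereal (Ssup t \<kappa> i))"
  define s where "s y = real_of_ereal (SUP \<xi>\<in>Xi. ereal (g_fun \<alpha> lam t (Y \<xi>) - \<kappa> * norm (\<xi> - y)))" for y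
  have sb: "\<forall>i<N. \<forall>\<xi>\<in>Xi. g_fun \<alpha> lam t (Y \<xi>) - \<kappa> * norm (\<xi> - xi0 i) \<le> s (xi0 i)"
  proof (intro allI impI ballI)
    fix i \<xi> assume i: "i < N" and x: "\<xi> \<in> Xi"
    have "ereal (g_fun \<alpha> lam t (Y \<xi>) - \<kappa> * norm (\<xi> - xi0 i)) \<le> Ssup t \<kappa> i" by (rule SUP_upper[OF x])
    also have "\<dots> = ereal (s (xi0 i))" using fin i by (simp add: s_def)
    finally show "g_fun \<alpha> lam t (Y \<xi>) - \<kappa> * norm (\<xi> - xi0 i) \<le> s (xi0 i)" by simp
  qed
  have "(\<integral>\<xi>. g_fun \<alpha> lam t (Y \<xi>) \<partial>Q) \<le> \<kappa> * \<rho> + (\<Sum>i<N. s (xi0 i)) / N"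
    by (rule weak_dual[OF Xi_closed N_pos samples Q _ Gm Q_facts(3)[OF Q] k0 sb]) (use rho_pos in simp)
  thus ?thesis unfolding Dual_fin[OF fin] by (simp add: s_def)
qed

lemma part1:
  "Phi_DRO Xi N xi0 \<rho> \<alpha> lam Y \<le> (INF tk\<in>(UNIV \<times> {0..}). Dual (fst tk) (snd tk))"
  unfolding Phi_DRO_def
proof (intro SUP_least INF_greatest)
  fix Q and tk :: "real \<times> real" assume Q: "Q \<in> wass_ball Xi N xi0 \<rho>" and tk: "tk \<in> UNIV \<times> {0..}"
  have "ereal ((1 - lb) * (\<integral>\<xi>. Y \<xi> \<partial>Q) + lb * CVaR \<alpha> Q Y)
      = (INF t. ereal (lb * t + (\<integral>\<xi>. g_fun \<alpha> lam t (Y \<xi>) \<partial>Q)))"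
    by (rule cvar_eq[OF Q_facts(1,2)[OF Q] alpha lam])
  also have "\<dots> \<le> ereal (lb * fst tk + (\<integral>\<xi>. g_fun \<alpha> lam (fst tk) (Y \<xi>) \<partial>Q))"
    by (rule INF_lower) simp
  also have "\<dots> \<le> Dual (fst tk) (snd tk)"
    by (rule wd_step[OF Q]) (use tk in auto)
  finally show "ereal ((1 - lb) * (\<integral>\<xi>. Y \<xi> \<partial>Q) + lb * CVaR \<alpha> Q Y) \<le> Dual (fst tk) (snd tk)" .
qed

lemma part2:
  assumes mm: "(SUP Q\<in>wass_ball Xi N xi0 \<rho>. INF t. ereal (lb * t + (\<integral>\<xi>. g_fun \<alpha> lam t (Y \<xi>) \<partial>Q)))
         = (INF t. SUP Q\<in>wass_ball Xi N xi0 \<rho>. ereal (lb * t + (\<integral>\<xi>. g_fun \<alpha> lam t (Y \<xi>) \<partial>Q)))"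
  shows "Phi_DRO Xi N xi0 \<rho> \<alpha> lam Y = (INF tk\<in>(UNIV \<times> {0..}). Dual (fst tk) (snd tk))"
proof (rule antisym[OF part1])
  have "Phi_DRO Xi N xi0 \<rho> \<alpha> lam Y =
      (SUP Q\<in>wass_ball Xi N xi0 \<rho>. INF t. ereal (lb * t + (\<integral>\<xi>. g_fun \<alpha> lam t (Y \<xi>) \<partial>Q)))"
    unfolding Phi_DRO_def by (intro SUP_cong refl cvar_eq[OF Q_facts(1,2) alpha lam])
  also have "\<dots> = (INF t. SUP Q\<in>wass_ball Xi N xi0 \<rho>. ereal (lb * t + (\<integral>\<xi>. g_fun \<alpha> lam t (Y \<xi>) \<partial>Q)))"
    by (rule mm)
  finally have Pe: "Phi_DRO Xi N xi0 \<rho> \<alpha> lam Y = \<dots>" .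
  show "(INF tk\<in>(UNIV \<times> {0..}). Dual (fst tk) (snd tk)) \<le> Phi_DRO Xi N xi0 \<rho> \<alpha> lam Y"
    unfolding Pe
  proof (rule INF_greatest)
    fix t :: real
    have "(INF tk\<in>(UNIV \<times> {0..}). Dual (fst tk) (snd tk)) \<le> (INF \<kappa>\<in>{0..}. Dual t \<kappa>)"
      by (intro INF_greatest INF_lower2[of "(t, _)"]) auto
    also have "\<dots> \<le> (SUP Q\<in>wass_ball Xi N xi0 \<rho>. ereal (lb * t + (\<integral>\<xi>. g_fun \<alpha> lam t (Y \<xi>) \<partial>Q)))"
      using strong_dual[OF N_pos samples rho_pos Gm, of "lb * t" t] by (simp add: add.assoc)
    finally show "(INF tk\<in>(UNIV \<times> {0..}). Dual (fst tk) (snd tk)) \<le> \<dots>" .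
  qed
qed

lemma semi_inf:
  "(INF tk\<in>(UNIV \<times> {0..}). Dual (fst tk) (snd tk)) =
   (INF (t, \<kappa>, s)\<in>{(t, \<kappa>, s). 0 \<le> \<kappa> \<and>
                 (\<forall>i<N. \<forall>\<xi>\<in>Xi. g_fun \<alpha> lam t (Y \<xi>) - \<kappa> * norm (\<xi> - xi0 i) \<le> s i)}.
               ereal (lb * t + \<kappa> * \<rho> + (1 / real N) * (\<Sum>i<N. s i)))"
proof (rule antisym)
  show "(INF tk\<in>(UNIV \<times> {0..}). Dual (fst tk) (snd tk)) \<le> (INF (t, \<kappa>, s)\<in>{(t, \<kappa>, s). 0 \<le> \<kappa> \<and>
                 (\<forall>i<N. \<forall>\<xi>\<in>Xi. g_fun \<alpha> lam t (Y \<xi>) - \<kappa> * norm (\<xi> - xi0 i) \<le> s i)}.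
               ereal (lb * t + \<kappa> * \<rho> + (1 / real N) * (\<Sum>i<N. s i)))"
  proof (rule INF_greatest, clarify)
    fix t \<kappa> :: real and s :: "nat \<Rightarrow> real"
    assume k0: "0 \<le> \<kappa>" and sb: "\<forall>i<N. \<forall>\<xi>\<in>Xi. g_fun \<alpha> lam t (Y \<xi>) - \<kappa> * norm (\<xi> - xi0 i) \<le> s i"
    have "(\<Sum>i<N. Ssup t \<kappa> i) \<le> (\<Sum>i<N. ereal (s i))"
      using sb by (intro sum_mono SUP_least) auto
    hence "ereal (1 / real N) * (\<Sum>i<N. Ssup t \<kappa> i) \<le> ereal (1 / real N) * ereal (\<Sum>i<N. s i)"
      by (intro ereal_mult_left_mono) auto
    hence "Dual t \<kappa> \<le> ereal (lb * t + \<kappa> * \<rho>) + ereal (1 / real N) * ereal (\<Sum>i<N. s i)"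
      by (rule add_left_mono)
    hence "Dual t \<kappa> \<le> ereal (lb * t + \<kappa> * \<rho> + 1 / real N * (\<Sum>i<N. s i))" by simp
    thus "(INF tk\<in>(UNIV \<times> {0..}). Dual (fst tk) (snd tk)) \<le> ereal (lb * t + \<kappa> * \<rho> + 1 / real N * (\<Sum>i<N. s i))"
      using k0 by (intro INF_lower2[of "(t, \<kappa>)"]) auto
  qed
  show "(INF (t, \<kappa>, s)\<in>{(t, \<kappa>, s). 0 \<le> \<kappa> \<and>
                 (\<forall>i<N. \<forall>\<xi>\<in>Xi. g_fun \<alpha> lam t (Y \<xi>) - \<kappa> * norm (\<xi> - xi0 i) \<le> s i)}.
               ereal (lb * t + \<kappa> * \<rho> + (1 / real N) * (\<Sum>i<N. s i)))
       \<le> (INF tk\<in>(UNIV \<times> {0..}). Dual (fst tk) (snd tk))"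
  proof (rule INF_greatest, clarify)
    fix t \<kappa> :: real assume k0: "0 \<le> \<kappa>"
    show "(INF (t, \<kappa>, s)\<in>{(t, \<kappa>, s). 0 \<le> \<kappa> \<and>
                 (\<forall>i<N. \<forall>\<xi>\<in>Xi. g_fun \<alpha> lam t (Y \<xi>) - \<kappa> * norm (\<xi> - xi0 i) \<le> s i)}.
               ereal (lb * t + \<kappa> * \<rho> + (1 / real N) * (\<Sum>i<N. s i))) \<le> Dual (fst (t, \<kappa>)) (snd (t, \<kappa>))"
      using Dual_cases[of t \<kappa>]
    proof
      assume "Dual t \<kappa> = \<infinity>" thus ?thesis by simp
    next
      assume fin: "\<forall>i<N. Ssup t \<kappa> i = ereal (real_of_ereal (Ssup t \<kappa> i))"
      define s where "s i = real_of_ereal (Ssup t \<kappa> i)" for i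
      have sb: "\<forall>i<N. \<forall>\<xi>\<in>Xi. g_fun \<alpha> lam t (Y \<xi>) - \<kappa> * norm (\<xi> - xi0 i) \<le> s i"
      proof (intro allI impI ballI)
        fix i \<xi> assume i: "i < N" and x: "\<xi> \<in> Xi"
        have "ereal (g_fun \<alpha> lam t (Y \<xi>) - \<kappa> * norm (\<xi> - xi0 i)) \<le> Ssup t \<kappa> i" by (rule SUP_upper[OF x])
        also have "\<dots> = ereal (s i)" using fin i by (simp add: s_def)
        finally show "g_fun \<alpha> lam t (Y \<xi>) - \<kappa> * norm (\<xi> - xi0 i) \<le> s i" by simp
      qed
      show ?thesis unfolding fst_conv snd_conv Dual_fin[OF fin] s_def[symmetric]
        using k0 sb by (intro INF_lower2[of "(t, \<kappa>, s)"]) auto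
    qed
  qed
qed

end



theorem proposition11:
  fixes Xi :: "'a::euclidean_space set"
    and N :: nat and xi0 :: "nat \<Rightarrow> 'a"
    and \<rho> \<alpha> lam :: real
    and od :: "'p::finite \<Rightarrow> 'w" and demand :: "'w \<Rightarrow> real"
    and Z :: "('p \<Rightarrow> real) \<Rightarrow> 'a \<Rightarrow> real"
  assumes Xi_closed: "closed Xi"
    and N_pos: "0 < N"
    and samples: "\<forall>i<N. xi0 i \<in> Xi"
    and rho_pos: "0 < \<rho>"
    and alpha: "0 < \<alpha>" "\<alpha> < 1"
    and lam_le: "lam \<le> \<alpha>"
    and Z_meas: "\<forall>f\<in>feasible_flows od demand. Z f \<in> borel_measurable (XiSpace Xi)"
    and Z_usc: "\<forall>f\<in>feasible_flows od demand. usc_on Xi (Z f)"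
    and Z_growth: "\<forall>f\<in>feasible_flows od demand. \<exists>C. \<forall>\<xi>\<in>Xi. \<bar>Z f \<xi>\<bar> \<le> C * (1 + norm \<xi>)"
  shows
    "(\<forall>f\<in>feasible_flows od demand.
        Phi_DRO Xi N xi0 \<rho> \<alpha> lam (Z f)
        \<le> (INF tk\<in>(UNIV \<times> {0..}).
              ereal (lambda_bar \<alpha> lam * fst tk + snd tk * \<rho>)
              + ereal (1 / real N) * (\<Sum>i<N. SUP \<xi>\<in>Xi.
                   ereal (g_fun \<alpha> lam (fst tk) (Z f \<xi>) - snd tk * norm (\<xi> - xi0 i)))))
   \<and>
    ((convex Xi
      \<and> (\<forall>f\<in>feasible_flows od demand.
           (SUP Q\<in>wass_ball Xi N xi0 \<rho>. INF t. ereal (lambda_bar \<alpha> lam * t + (\<integral>\<xi>. g_fun \<alpha> lam t (Z f \<xi>) \<partial>Q)))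
         = (INF t. SUP Q\<in>wass_ball Xi N xi0 \<rho>. ereal (lambda_bar \<alpha> lam * t + (\<integral>\<xi>. g_fun \<alpha> lam t (Z f \<xi>) \<partial>Q))))
      \<and> (\<forall>f\<in>feasible_flows od demand. \<forall>t. piecewise_concave_on Xi (\<lambda>\<xi>. g_fun \<alpha> lam t (Z f \<xi>))))
     \<longrightarrow>
       (\<forall>f\<in>feasible_flows od demand.
          Phi_DRO Xi N xi0 \<rho> \<alpha> lam (Z f)
          = (INF tk\<in>(UNIV \<times> {0..}).
              ereal (lambda_bar \<alpha> lam * fst tk + snd tk * \<rho>)
              + ereal (1 / real N) * (\<Sum>i<N. SUP \<xi>\<in>Xi.
                   ereal (g_fun \<alpha> lam (fst tk) (Z f \<xi>) - snd tk * norm (\<xi> - xi0 i))))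
        \<and> Phi_DRO Xi N xi0 \<rho> \<alpha> lam (Z f)
          = (INF (t, \<kappa>, s)\<in>{(t, \<kappa>, s). 0 \<le> \<kappa> \<and>
                 (\<forall>i<N. \<forall>\<xi>\<in>Xi. g_fun \<alpha> lam t (Z f \<xi>) - \<kappa> * norm (\<xi> - xi0 i) \<le> s i)}.
               ereal (lambda_bar \<alpha> lam * t + \<kappa> * \<rho> + (1 / real N) * (\<Sum>i<N. s i))))
       \<and> (INF f\<in>feasible_flows od demand. Phi_DRO Xi N xi0 \<rho> \<alpha> lam (Z f))
         = (INF (f, t, \<kappa>, s)\<in>{(f, t, \<kappa>, s). f \<in> feasible_flows od demand \<and> 0 \<le> \<kappa> \<and>
                 (\<forall>i<N. \<forall>\<xi>\<in>Xi. g_fun \<alpha> lam t (Z f \<xi>) - \<kappa> * norm (\<xi> - xi0 i) \<le> s i)}.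
               ereal (lambda_bar \<alpha> lam * t + \<kappa> * \<rho> + (1 / real N) * (\<Sum>i<N. s i))))"
proof -
  define F where "F = feasible_flows od demand"
  have gr: "\<exists>C. \<forall>\<xi>\<in>Xi. \<bar>Z f \<xi>\<bar> \<le> C * (1 + norm \<xi>)" if "f \<in> F" for f
    using Z_growth that by (simp add: F_def)
  have zm: "Z f \<in> borel_measurable (XiSpace Xi)" if "f \<in> F" for f
    using Z_meas that by (simp add: F_def)
  have P1: "\<forall>f\<in>F.
        Phi_DRO Xi N xi0 \<rho> \<alpha> lam (Z f)
        \<le> (INF tk\<in>(UNIV \<times> {0..}).
              ereal (lambda_bar \<alpha> lam * fst tk + snd tk * \<rho>)
              + ereal (1 / real N) * (\<Sum>i<N. SUP \<xi>\<in>Xi.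
                   ereal (g_fun \<alpha> lam (fst tk) (Z f \<xi>) - snd tk * norm (\<xi> - xi0 i))))"
  proof
    fix f assume f: "f \<in> F"
    obtain C where C: "\<forall>\<xi>\<in>Xi. \<bar>Z f \<xi>\<bar> \<le> C * (1 + norm \<xi>)" using gr[OF f] by blast
    show "Phi_DRO Xi N xi0 \<rho> \<alpha> lam (Z f) \<le> (INF tk\<in>(UNIV \<times> {0..}).
              ereal (lambda_bar \<alpha> lam * fst tk + snd tk * \<rho>)
              + ereal (1 / real N) * (\<Sum>i<N. SUP \<xi>\<in>Xi.
                   ereal (g_fun \<alpha> lam (fst tk) (Z f \<xi>) - snd tk * norm (\<xi> - xi0 i))))"
      by (rule part1[OF Xi_closed N_pos samples rho_pos alpha lam_le zm[OF f] C])
  qed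
  show ?thesis unfolding F_def[symmetric]
  proof (intro conjI P1 impI)
    assume H: "convex Xi
      \<and> (\<forall>f\<in>F.
           (SUP Q\<in>wass_ball Xi N xi0 \<rho>. INF t. ereal (lambda_bar \<alpha> lam * t + (\<integral>\<xi>. g_fun \<alpha> lam t (Z f \<xi>) \<partial>Q)))
         = (INF t. SUP Q\<in>wass_ball Xi N xi0 \<rho>. ereal (lambda_bar \<alpha> lam * t + (\<integral>\<xi>. g_fun \<alpha> lam t (Z f \<xi>) \<partial>Q))))
      \<and> (\<forall>f\<in>F. \<forall>t. piecewise_concave_on Xi (\<lambda>\<xi>. g_fun \<alpha> lam t (Z f \<xi>)))"
    have E: "Phi_DRO Xi N xi0 \<rho> \<alpha> lam (Z f)
          = (INF tk\<in>(UNIV \<times> {0..}).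
              ereal (lambda_bar \<alpha> lam * fst tk + snd tk * \<rho>)
              + ereal (1 / real N) * (\<Sum>i<N. SUP \<xi>\<in>Xi.
                   ereal (g_fun \<alpha> lam (fst tk) (Z f \<xi>) - snd tk * norm (\<xi> - xi0 i))))
        \<and> Phi_DRO Xi N xi0 \<rho> \<alpha> lam (Z f)
          = (INF (t, \<kappa>, s)\<in>{(t, \<kappa>, s). 0 \<le> \<kappa> \<and>
                 (\<forall>i<N. \<forall>\<xi>\<in>Xi. g_fun \<alpha> lam t (Z f \<xi>) - \<kappa> * norm (\<xi> - xi0 i) \<le> s i)}.
               ereal (lambda_bar \<alpha> lam * t + \<kappa> * \<rho> + (1 / real N) * (\<Sum>i<N. s i)))"
      if f: "f \<in> F" for f
    proof -
      obtain C where C: "\<forall>\<xi>\<in>Xi. \<bar>Z f \<xi>\<bar> \<le> C * (1 + norm \<xi>)" using gr[OF f] by blast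
      note p2 = part2[OF Xi_closed N_pos samples rho_pos alpha lam_le zm[OF f] C]
      note si = semi_inf[OF Xi_closed N_pos samples rho_pos alpha lam_le zm[OF f] C]
      have mm: "(SUP Q\<in>wass_ball Xi N xi0 \<rho>. INF t. ereal (lambda_bar \<alpha> lam * t + (\<integral>\<xi>. g_fun \<alpha> lam t (Z f \<xi>) \<partial>Q)))
         = (INF t. SUP Q\<in>wass_ball Xi N xi0 \<rho>. ereal (lambda_bar \<alpha> lam * t + (\<integral>\<xi>. g_fun \<alpha> lam t (Z f \<xi>) \<partial>Q)))"
        using H f by blast
      show ?thesis using p2[OF mm] si by simp
    qed
    show "\<forall>f\<in>F.
          Phi_DRO Xi N xi0 \<rho> \<alpha> lam (Z f)
          = (INF tk\<in>(UNIV \<times> {0..}).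
              ereal (lambda_bar \<alpha> lam * fst tk + snd tk * \<rho>)
              + ereal (1 / real N) * (\<Sum>i<N. SUP \<xi>\<in>Xi.
                   ereal (g_fun \<alpha> lam (fst tk) (Z f \<xi>) - snd tk * norm (\<xi> - xi0 i))))
        \<and> Phi_DRO Xi N xi0 \<rho> \<alpha> lam (Z f)
          = (INF (t, \<kappa>, s)\<in>{(t, \<kappa>, s). 0 \<le> \<kappa> \<and>
                 (\<forall>i<N. \<forall>\<xi>\<in>Xi. g_fun \<alpha> lam t (Z f \<xi>) - \<kappa> * norm (\<xi> - xi0 i) \<le> s i)}.
               ereal (lambda_bar \<alpha> lam * t + \<kappa> * \<rho> + (1 / real N) * (\<Sum>i<N. s i)))"
      using E by blast
    have E2: "Phi_DRO Xi N xi0 \<rho> \<alpha> lam (Z f)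
          = (INF (t, \<kappa>, s)\<in>{(t, \<kappa>, s). 0 \<le> \<kappa> \<and>
                 (\<forall>i<N. \<forall>\<xi>\<in>Xi. g_fun \<alpha> lam t (Z f \<xi>) - \<kappa> * norm (\<xi> - xi0 i) \<le> s i)}.
               ereal (lambda_bar \<alpha> lam * t + \<kappa> * \<rho> + (1 / real N) * (\<Sum>i<N. s i)))"
      if "f \<in> F" for f using E[OF that] by blast
    show "(INF f\<in>F. Phi_DRO Xi N xi0 \<rho> \<alpha> lam (Z f))
         = (INF (f, t, \<kappa>, s)\<in>{(f, t, \<kappa>, s). f \<in> F \<and> 0 \<le> \<kappa> \<and>
                 (\<forall>i<N. \<forall>\<xi>\<in>Xi. g_fun \<alpha> lam t (Z f \<xi>) - \<kappa> * norm (\<xi> - xi0 i) \<le> s i)}.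
               ereal (lambda_bar \<alpha> lam * t + \<kappa> * \<rho> + (1 / real N) * (\<Sum>i<N. s i)))"
    proof (rule antisym)
      show "(INF f\<in>F. Phi_DRO Xi N xi0 \<rho> \<alpha> lam (Z f))
         \<le> (INF (f, t, \<kappa>, s)\<in>{(f, t, \<kappa>, s). f \<in> F \<and> 0 \<le> \<kappa> \<and>
                 (\<forall>i<N. \<forall>\<xi>\<in>Xi. g_fun \<alpha> lam t (Z f \<xi>) - \<kappa> * norm (\<xi> - xi0 i) \<le> s i)}.
               ereal (lambda_bar \<alpha> lam * t + \<kappa> * \<rho> + (1 / real N) * (\<Sum>i<N. s i)))"
      proof (rule INF_greatest, clarify)
        fix f t \<kappa> and s :: "nat \<Rightarrow> real"
        assume f: "f \<in> F" and k: "0 \<le> \<kappa>"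
          and sb: "\<forall>i<N. \<forall>\<xi>\<in>Xi. g_fun \<alpha> lam t (Z f \<xi>) - \<kappa> * norm (\<xi> - xi0 i) \<le> s i"
        have "(INF f\<in>F. Phi_DRO Xi N xi0 \<rho> \<alpha> lam (Z f)) \<le> Phi_DRO Xi N xi0 \<rho> \<alpha> lam (Z f)"
          by (rule INF_lower[OF f])
        also have "\<dots> \<le> ereal (lambda_bar \<alpha> lam * t + \<kappa> * \<rho> + (1 / real N) * (\<Sum>i<N. s i))"
          unfolding E2[OF f] using k sb by (intro INF_lower2[of "(t, \<kappa>, s)"]) auto
        finally show "(INF f\<in>F. Phi_DRO Xi N xi0 \<rho> \<alpha> lam (Z f)) \<le> ereal (lambda_bar \<alpha> lam * t + \<kappa> * \<rho> + (1 / real N) * (\<Sum>i<N. s i))" .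
      qed
      show "(INF (f, t, \<kappa>, s)\<in>{(f, t, \<kappa>, s). f \<in> F \<and> 0 \<le> \<kappa> \<and>
                 (\<forall>i<N. \<forall>\<xi>\<in>Xi. g_fun \<alpha> lam t (Z f \<xi>) - \<kappa> * norm (\<xi> - xi0 i) \<le> s i)}.
               ereal (lambda_bar \<alpha> lam * t + \<kappa> * \<rho> + (1 / real N) * (\<Sum>i<N. s i)))
            \<le> (INF f\<in>F. Phi_DRO Xi N xi0 \<rho> \<alpha> lam (Z f))"
      proof (rule INF_greatest)
        fix f assume f: "f \<in> F"
        show "(INF (f, t, \<kappa>, s)\<in>{(f, t, \<kappa>, s). f \<in> F \<and> 0 \<le> \<kappa> \<and>
                 (\<forall>i<N. \<forall>\<xi>\<in>Xi. g_fun \<alpha> lam t (Z f \<xi>) - \<kappa> * norm (\<xi> - xi0 i) \<le> s i)}.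
               ereal (lambda_bar \<alpha> lam * t + \<kappa> * \<rho> + (1 / real N) * (\<Sum>i<N. s i)))
            \<le> Phi_DRO Xi N xi0 \<rho> \<alpha> lam (Z f)"
          unfolding E2[OF f]
        proof (rule INF_greatest, clarify)
          fix t \<kappa> and s :: "nat \<Rightarrow> real"
          assume k: "0 \<le> \<kappa>"
            and sb: "\<forall>i<N. \<forall>\<xi>\<in>Xi. g_fun \<alpha> lam t (Z f \<xi>) - \<kappa> * norm (\<xi> - xi0 i) \<le> s i"
          show "(INF (f, t, \<kappa>, s)\<in>{(f, t, \<kappa>, s). f \<in> F \<and> 0 \<le> \<kappa> \<and>
                 (\<forall>i<N. \<forall>\<xi>\<in>Xi. g_fun \<alpha> lam t (Z f \<xi>) - \<kappa> * norm (\<xi> - xi0 i) \<le> s i)}.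
               ereal (lambda_bar \<alpha> lam * t + \<kappa> * \<rho> + (1 / real N) * (\<Sum>i<N. s i)))
            \<le> ereal (lambda_bar \<alpha> lam * t + \<kappa> * \<rho> + (1 / real N) * (\<Sum>i<N. s i))"
            using f k sb by (intro INF_lower2[of "(f, t, \<kappa>, s)"]) auto
        qed
      qed
    qed
  qed
qed


end
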